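(* Let $\mathcal{G}$ be a concave game, let $\varepsilon>0$, $s\ge1$, and for each $i$ let $d^{-i}$ be a metric on $\mathcal{A}^{-i}$. For each $i$ let $M^i:=2\max_{a^i\in\mathcal{A}^i,a^{-i}\in\mathcal{A}^{-i}}|u^i(a^i,a^{-i})|/\varepsilon^s$, $\tilde{\mathcal{A}}^i:=\mathcal{A}^i\times[0,M^i]$, and $$\tilde u^i_\varepsilon\big((a^i,\lambda^i),(a^{-i},\lambda^{-i})\big):=\min_{\hat a^{-i}\in\mathcal{A}^{-i}}\Big\{u^i(a^i,\hat a^{-i})+\lambda^i d^{-i}(a^{-i},\hat a^{-i})^s\Big\}-\lambda^i\varepsilon^s.$$ Let $\tilde{\mathcal{G}}_\varepsilon$ be the $N$-player game with action spaces $\tilde{\mathcal{A}}^i$ and payoffs $\tilde u^i_\varepsilon$. Then $\tilde{\mathcal{G}}_\varepsilon$ is a concave game, and $\bar a=(\bar a^1,\dots,\bar a^N)$ is a pure strategically robust equilibrium of $\mathcal{G}$ with robustness level $\varepsilon$ if and only if there exist $\bar\lambda^i\ge0$, $i=1,\dots,N$, such that $\big((\bar a^1,\bar\lambda^1),\dots,(\bar a^N,\bar\lambda^N)\big)$ is a Nash equilibrium of $\tilde{\mathcal{G}}_\varepsilon$.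
   Context: A concave game is an $N$-player game in which each action space $\mathcal{A}^i$ is a compact convex subset of a Euclidean space, and each payoff $u^i:\mathcal{A}^i\times\mathcal{A}^{-i}\to\mathbb{R}$ is continuous and concave in $a^i$ for each fixed $a^{-i}$, where $\mathcal{A}^{-i}:=\prod_{j\ne i}\mathcal{A}^j$ (here the original $\mathcal{A}^i\subset\mathbb{R}^n$). The metric $d^{-i}$ is compatible with the topology of $\mathcal{A}^{-i}$. A pure strategically robust equilibrium with robustness level $\varepsilon$ is $\bar a$ such that for all $i$, $\bar a^i\in\arg\max_{a^i\in\mathcal{A}^i}\min_{q\in\mathcal{S}^i_\varepsilon(\delta_{\bar a^{-i}})}\mathbb{E}_{a^{-i}\sim q}[u^i(a^i,a^{-i})]$, where $\delta_{\bar a^{-i}}$ is the Dirac measure at $\bar a^{-i}$ and $\mathcal{S}^i_\varepsilon(\mu)=\{q\in\mathcal{P}(\mathcal{A}^{-i}):W_s(\mu,q)\le\varepsilon\}$, $\mathcal{P}(\mathcal{A}^{-i})$ the Borel probability measures, $W_s(\mu,\nu)=\left(\min_{\gamma\in\Gamma(\mu,\nu)}\int d^{-i}(x,y)^s\,d\gamma(x,y)\right)^{1/s}$ over couplings $\Gamma(\mu,\nu)$. A Nash equilibrium of $\tilde{\mathcal{G}}_\varepsilon$ is a profile in which each agent's component maximizes its payoff over its own action space given the others' components. *)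

theory Defs
  imports "HOL-Analysis.Analysis" "HOL-Probability.Probability"
begin

text \<open>Players are 0,...,N-1. A profile is a function nat => action; action space of
  player i is A i. The opponents' action space A^{-i} is the set of extensional functions
  on the other players.\<close>

definition opp_space :: "nat \<Rightarrow> (nat \<Rightarrow> 'v set) \<Rightarrow> nat \<Rightarrow> (nat \<Rightarrow> 'v) set" where
  "opp_space N A i = PiE ({..<N} - {i}) A"

definition opp_profile :: "nat \<Rightarrow> nat \<Rightarrow> (nat \<Rightarrow> 'v) \<Rightarrow> (nat \<Rightarrow> 'v)" where
  "opp_profile N i a = restrict a ({..<N} - {i})"

definition concave_game ::
  "nat \<Rightarrow> (nat \<Rightarrow> 'v::euclidean_space set) \<Rightarrow> (nat \<Rightarrow> 'v \<Rightarrow> (nat \<Rightarrow> 'v) \<Rightarrow> real) \<Rightarrow> bool" where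
  "concave_game N A u \<longleftrightarrow>
     (\<forall>i<N. compact (A i) \<and> convex (A i) \<and>
        continuous_on (A i \<times> opp_space N A i) (\<lambda>(x, y). u i x y) \<and>
        (\<forall>y\<in>opp_space N A i. concave_on (A i) (\<lambda>x. u i x y)))"

definition nash_equilibrium ::
  "nat \<Rightarrow> (nat \<Rightarrow> 'v set) \<Rightarrow> (nat \<Rightarrow> 'v \<Rightarrow> (nat \<Rightarrow> 'v) \<Rightarrow> real) \<Rightarrow> (nat \<Rightarrow> 'v) \<Rightarrow> bool" where
  "nash_equilibrium N A u b \<longleftrightarrow>
     b \<in> PiE {..<N} A \<and>
     (\<forall>i<N. \<forall>x\<in>A i. u i x (opp_profile N i b) \<le> u i (b i) (opp_profile N i b))"

definition couplings :: "'a measure \<Rightarrow> 'a measure \<Rightarrow> ('a \<times> 'a) measure set" where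
  "couplings \<mu> \<nu> = {\<gamma>. prob_space \<gamma> \<and> sets \<gamma> = sets (\<mu> \<Otimes>\<^sub>M \<nu>) \<and>
      distr \<gamma> \<mu> fst = \<mu> \<and> distr \<gamma> \<nu> snd = \<nu>}"

definition wasserstein :: "('a \<Rightarrow> 'a \<Rightarrow> real) \<Rightarrow> real \<Rightarrow> 'a measure \<Rightarrow> 'a measure \<Rightarrow> real" where
  "wasserstein d s \<mu> \<nu> =
     (INF \<gamma>\<in>couplings \<mu> \<nu>. integral\<^sup>L \<gamma> (\<lambda>(x, y). d x y powr s)) powr (1 / s)"

definition borel_prob_measures :: "'a::topological_space set \<Rightarrow> 'a measure set" where
  "borel_prob_measures X = {q. prob_space q \<and> sets q = sets (restrict_space borel X)}"

definition ambiguity_set ::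
  "nat \<Rightarrow> (nat \<Rightarrow> 'v::topological_space set) \<Rightarrow> (nat \<Rightarrow> (nat \<Rightarrow> 'v) \<Rightarrow> (nat \<Rightarrow> 'v) \<Rightarrow> real)
   \<Rightarrow> real \<Rightarrow> real \<Rightarrow> nat \<Rightarrow> (nat \<Rightarrow> 'v) measure \<Rightarrow> (nat \<Rightarrow> 'v) measure set" where
  "ambiguity_set N A d s \<epsilon> i \<mu> =
     {q \<in> borel_prob_measures (opp_space N A i). wasserstein (d i) s \<mu> q \<le> \<epsilon>}"

definition robust_value ::
  "nat \<Rightarrow> (nat \<Rightarrow> 'v::topological_space set) \<Rightarrow> (nat \<Rightarrow> 'v \<Rightarrow> (nat \<Rightarrow> 'v) \<Rightarrow> real)
   \<Rightarrow> (nat \<Rightarrow> (nat \<Rightarrow> 'v) \<Rightarrow> (nat \<Rightarrow> 'v) \<Rightarrow> real) \<Rightarrow> real \<Rightarrow> real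
   \<Rightarrow> nat \<Rightarrow> (nat \<Rightarrow> 'v) \<Rightarrow> 'v \<Rightarrow> real" where
  "robust_value N A u d s \<epsilon> i abar x =
     (INF q\<in>ambiguity_set N A d s \<epsilon> i
              (return (restrict_space borel (opp_space N A i)) (opp_profile N i abar)).
        integral\<^sup>L q (\<lambda>y. u i x y))"

definition strategically_robust_eq ::
  "nat \<Rightarrow> (nat \<Rightarrow> 'v::topological_space set) \<Rightarrow> (nat \<Rightarrow> 'v \<Rightarrow> (nat \<Rightarrow> 'v) \<Rightarrow> real)
   \<Rightarrow> (nat \<Rightarrow> (nat \<Rightarrow> 'v) \<Rightarrow> (nat \<Rightarrow> 'v) \<Rightarrow> real) \<Rightarrow> real \<Rightarrow> real \<Rightarrow> (nat \<Rightarrow> 'v) \<Rightarrow> bool" where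
  "strategically_robust_eq N A u d s \<epsilon> abar \<longleftrightarrow>
     (\<forall>i<N. abar i \<in> A i \<and>
        (\<forall>x\<in>A i. robust_value N A u d s \<epsilon> i abar x \<le> robust_value N A u d s \<epsilon> i abar (abar i)))"

definition lift_bound ::
  "nat \<Rightarrow> (nat \<Rightarrow> 'v set) \<Rightarrow> (nat \<Rightarrow> 'v \<Rightarrow> (nat \<Rightarrow> 'v) \<Rightarrow> real) \<Rightarrow> real \<Rightarrow> real \<Rightarrow> nat \<Rightarrow> real" where
  "lift_bound N A u s \<epsilon> i =
     2 * (SUP p\<in>A i \<times> opp_space N A i. \<bar>u i (fst p) (snd p)\<bar>) / \<epsilon> powr s"

definition lift_actions ::
  "nat \<Rightarrow> (nat \<Rightarrow> 'v set) \<Rightarrow> (nat \<Rightarrow> 'v \<Rightarrow> (nat \<Rightarrow> 'v) \<Rightarrow> real) \<Rightarrow> real \<Rightarrow> real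
   \<Rightarrow> nat \<Rightarrow> ('v \<times> real) set" where
  "lift_actions N A u s \<epsilon> i = A i \<times> {0 .. lift_bound N A u s \<epsilon> i}"

definition lift_payoff ::
  "nat \<Rightarrow> (nat \<Rightarrow> 'v set) \<Rightarrow> (nat \<Rightarrow> 'v \<Rightarrow> (nat \<Rightarrow> 'v) \<Rightarrow> real)
   \<Rightarrow> (nat \<Rightarrow> (nat \<Rightarrow> 'v) \<Rightarrow> (nat \<Rightarrow> 'v) \<Rightarrow> real) \<Rightarrow> real \<Rightarrow> real
   \<Rightarrow> nat \<Rightarrow> 'v \<times> real \<Rightarrow> (nat \<Rightarrow> 'v \<times> real) \<Rightarrow> real" where
  "lift_payoff N A u d s \<epsilon> i xl b =
     (INF ah\<in>opp_space N A i.
        u i (fst xl) ah + snd xl * (d i (opp_profile N i (\<lambda>j. fst (b j))) ah) powr s)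
     - snd xl * \<epsilon> powr s"

end

theory Submission
  imports Defs
begin


lemma cont_inf:
  fixes F :: "'a::metric_space \<Rightarrow> 'b::metric_space \<Rightarrow> real"
  assumes Z: "compact Z" and Y: "compact Y" "Y \<noteq> {}"
    and F: "continuous_on (Z \<times> Y) (\<lambda>(z,y). F z y)"
  shows "continuous_on Z (\<lambda>z. INF y\<in>Y. F z y)"
proof -
  have uc: "uniformly_continuous_on (Z \<times> Y) (\<lambda>(z,y). F z y)"
    using compact_uniformly_continuous[OF F compact_Times[OF Z Y(1)]] .
  have cy: "continuous_on Y (F z)" if "z \<in> Z" for z
  proof -
    have "continuous_on Y ((\<lambda>(z,y). F z y) \<circ> (\<lambda>y. (z,y)))"
      by (rule continuous_on_compose[OF continuous_on_Pair[OF continuous_on_const continuous_on_id]])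
         (rule continuous_on_subset[OF F], use that in auto)
    then show ?thesis by (simp add: o_def)
  qed
  have bdd: "bdd_below (F z ` Y)" if "z \<in> Z" for z
    using compact_continuous_image[OF cy[OF that] Y(1)]
    by (simp add: bounded_imp_bdd_below compact_imp_bounded)
  have "uniformly_continuous_on Z (\<lambda>z. INF y\<in>Y. F z y)"
    unfolding uniformly_continuous_on_def
  proof (intro allI impI)
    fix e :: real assume e: "e > 0"
    obtain d where d: "d > 0" and
      dd: "\<And>x x'. x \<in> Z \<times> Y \<Longrightarrow> x' \<in> Z \<times> Y \<Longrightarrow> dist x' x < d \<Longrightarrow>
              dist ((\<lambda>(z,y). F z y) x') ((\<lambda>(z,y). F z y) x) < e / 2"
      using uc e unfolding uniformly_continuous_on_def by (metis half_gt_zero)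
    have one: "(INF y\<in>Y. F z' y) \<le> (INF y\<in>Y. F z y) + e / 2"
      if zz: "z \<in> Z" "z' \<in> Z" "dist z' z < d" for z z'
    proof -
      have "(INF y\<in>Y. F z' y) - e / 2 \<le> (INF y\<in>Y. F z y)"
      proof (rule cINF_greatest[OF Y(2)])
        fix y assume y: "y \<in> Y"
        have "dist (z', y) (z, y) < d" using zz by (simp add: dist_Pair_Pair)
        then have "dist (F z' y) (F z y) < e / 2" using dd[of "(z,y)" "(z',y)"] zz y by auto
        then have "F z' y < F z y + e / 2" by (auto simp only: dist_real_def)
        moreover have "(INF y\<in>Y. F z' y) \<le> F z' y" by (rule cINF_lower[OF bdd[OF zz(2)] y])
        ultimately show "(INF y\<in>Y. F z' y) - e / 2 \<le> F z y" by linarith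
      qed
      then show ?thesis by linarith
    qed
    show "\<exists>d>0. \<forall>x\<in>Z. \<forall>x'\<in>Z. dist x' x < d \<longrightarrow>
            dist (INF y\<in>Y. F x' y) (INF y\<in>Y. F x y) < e"
    proof (intro exI[of _ d] conjI ballI impI d)
      fix x x' assume "x \<in> Z" "x' \<in> Z" "dist x' x < d"
      then have "(INF y\<in>Y. F x' y) \<le> (INF y\<in>Y. F x y) + e / 2"
        "(INF y\<in>Y. F x y) \<le> (INF y\<in>Y. F x' y) + e / 2"
        using one by (auto simp: dist_commute)
      then show "dist (INF y\<in>Y. F x' y) (INF y\<in>Y. F x y) < e"
        using e by (simp add: dist_real_def abs_less_iff)
    qed
  qed
  then show ?thesis by (rule uniformly_continuous_imp_continuous)
qed



lemma cont_min_exists: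
  fixes h :: "'b::metric_space \<Rightarrow> real"
  assumes "compact Y" "Y \<noteq> {}" "continuous_on Y h"
  shows "\<exists>y\<in>Y. \<forall>y'\<in>Y. h y \<le> h y'"
  using continuous_attains_inf[OF assms] by blast

lemma inf_le_point:
  fixes h :: "'b::metric_space \<Rightarrow> real"
  assumes "compact Y" "continuous_on Y h" "y \<in> Y"
  shows "(INF y\<in>Y. h y) \<le> h y"
proof (rule cINF_lower[OF _ assms(3)])
  show "bdd_below (h ` Y)"
    using compact_continuous_image[OF assms(2,1)]
    by (simp add: bounded_imp_bdd_below compact_imp_bounded)
qed

lemma inf_eq_point:
  fixes h :: "'b::metric_space \<Rightarrow> real"
  assumes "compact Y" "continuous_on Y h" "y \<in> Y" "\<forall>y'\<in>Y. h y \<le> h y'"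
  shows "(INF y\<in>Y. h y) = h y"
  by (rule antisym[OF inf_le_point[OF assms(1-3)]]) (rule cINF_greatest, use assms in auto)

lemma le_by_eps:
  fixes a b k :: real
  assumes "\<And>\<delta>. 0 < \<delta> \<Longrightarrow> \<delta> \<le> r \<Longrightarrow> a \<le> b + \<delta> * k" "r > 0" "k \<ge> 0"
  shows "a \<le> b"
proof (rule ccontr)
  assume "\<not> a \<le> b"
  then have ab: "a - b > 0" by simp
  define \<delta> where "\<delta> = min r ((a - b) / (2 * (k + 1)))"
  have d0: "\<delta> > 0" using ab assms by (simp add: \<delta>_def)
  have "\<delta> * k \<le> ((a - b) / (2 * (k + 1))) * k"
    using assms(3) by (intro mult_right_mono) (auto simp: \<delta>_def)
  also have "\<dots> < a - b"
  proof -
    have "((a - b) / (2 * (k + 1))) * k = (a - b) * (k / (2 * (k + 1)))" by simp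
    also have "\<dots> < (a - b) * 1"
      using ab assms(3) by (intro mult_strict_left_mono) (auto simp: field_simps)
    finally show ?thesis by simp
  qed
  finally have "\<delta> * k < a - b" .
  moreover have "a \<le> b + \<delta> * k" using assms(1)[OF d0] by (simp add: \<delta>_def)
  ultimately show False by linarith
qed



lemma compact_sub:
  fixes c :: "'b::metric_space \<Rightarrow> real"
  assumes "compact Y" "continuous_on Y c"
  shows "compact {y\<in>Y. c y \<le> e}" "compact {y\<in>Y. e \<le> c y}"
proof -
  have cl: "closed Y" using assms(1) by (rule compact_imp_closed)
  have "{y\<in>Y. c y \<le> e} = Y \<inter> (Y \<inter> c -` {..e})" by auto
  then show "compact {y\<in>Y. c y \<le> e}"
    using compact_Int_closed[OF assms(1) continuous_closed_preimage[OF assms(2) cl closed_atMost]]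
    by simp
  have "{y\<in>Y. e \<le> c y} = Y \<inter> (Y \<inter> c -` {e..})" by auto
  then show "compact {y\<in>Y. e \<le> c y}"
    using compact_Int_closed[OF assms(1) continuous_closed_preimage[OF assms(2) cl closed_atLeast]]
    by simp
qed

lemma duality:
  fixes g c :: "'b::metric_space \<Rightarrow> real"
  assumes Y: "compact Y" and p: "p \<in> Y" and g: "continuous_on Y g" and c: "continuous_on Y c"
    and c0: "\<And>y. y \<in> Y \<Longrightarrow> c y \<ge> 0" and cp: "c p = 0" and e: "e > 0"
    and K: "\<And>y. y \<in> Y \<Longrightarrow> \<bar>g y\<bar> \<le> K"
  shows "\<exists>l\<in>{0..2*K/e}. (\<forall>l'\<ge>0. (INF y\<in>Y. g y + l' * c y) - l' * e \<le> (INF y\<in>Y. g y + l * c y) - l * e)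
     \<and> (\<exists>y1\<in>Y. \<exists>y2\<in>Y. \<exists>t\<in>{0..1}. t * c y1 + (1 - t) * c y2 \<le> e
            \<and> t * g y1 + (1 - t) * g y2 \<le> (INF y\<in>Y. g y + l * c y) - l * e)"
proof -
  define m where "m l = (INF y\<in>Y. g y + l * c y)" for l
  define \<phi> where "\<phi> l = m l - l * e" for l
  have Yne: "Y \<noteq> {}" using p by auto
  have hc: "continuous_on Y (\<lambda>y. g y + l * c y)" for l
    by (intro continuous_intros g c)
  have mle: "m l \<le> g y + l * c y" if "y \<in> Y" for l y
    unfolding m_def by (rule inf_le_point[OF Y hc that])
  have mex: "\<exists>y\<in>Y. m l = g y + l * c y" for l
  proof -
    obtain y where "y \<in> Y" "\<forall>y'\<in>Y. g y + l * c y \<le> g y' + l * c y'"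
      using cont_min_exists[OF Y Yne hc] by blast
    then show ?thesis unfolding m_def using inf_eq_point[OF Y hc] by blast
  qed
  obtain C where C: "\<And>y. y \<in> Y \<Longrightarrow> c y \<le> C"
    using compact_continuous_image[OF c Y] compact_imp_bounded bounded_imp_bdd_above
    by (metis bdd_above.E imageI)
  have C0: "C \<ge> 0" using C[OF p] cp by simp
  define M where "M = 2 * K / e"
  have K0: "K \<ge> 0" using K[OF p] by simp
  have M0: "M \<ge> 0" using K0 e by (simp add: M_def)
  have contphi: "continuous_on {0..M} \<phi>"
  proof -
    have "continuous_on ({0..M} \<times> Y) (\<lambda>(l, y). g y + l * c y)"
    proof -
      have "continuous_on ({0..M} \<times> Y) (\<lambda>x. g (snd x) + fst x * c (snd x))"
        by (intro continuous_intros continuous_on_compose2[OF g] continuous_on_compose2[OF c]) auto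
      then show ?thesis by (simp add: case_prod_beta')
    qed
    from cont_inf[OF compact_Icc Y Yne this]
    have "continuous_on {0..M} m" unfolding m_def .
    then show ?thesis unfolding \<phi>_def by (intro continuous_intros)
  qed
  obtain l where l: "l \<in> {0..M}" and lmax: "\<And>l'. l' \<in> {0..M} \<Longrightarrow> \<phi> l' \<le> \<phi> l"
    using continuous_attains_sup[OF compact_Icc _ contphi] M0 by auto
  have glob: "\<phi> l' \<le> \<phi> l" if "l' \<ge> 0" for l'
  proof (cases "l' \<le> M")
    case True then show ?thesis using lmax that by auto
  next
    case False
    have "\<phi> l' \<le> g p - l' * e" using mle[OF p, of l'] cp by (simp add: \<phi>_def)
    also have "\<dots> \<le> K - l' * e" using K[OF p] by simp
    also have "\<dots> \<le> - K"
    proof -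
      have "M * e \<le> l' * e" using False e by simp
      moreover have "M * e = 2 * K" using e by (simp add: M_def)
      ultimately show ?thesis by linarith
    qed
    also have "\<dots> \<le> \<phi> 0"
    proof -
      have "- K \<le> m 0" unfolding m_def
        by (rule cINF_greatest[OF Yne]) (use K in force)
      then show ?thesis by (simp add: \<phi>_def)
    qed
    also have "\<dots> \<le> \<phi> l" using lmax M0 by simp
    finally show ?thesis .
  qed
  obtain ys where ys: "ys \<in> Y" "m l = g ys + l * c ys" using mex by blast
  define Yp where "Yp = {y\<in>Y. c y \<le> e}"
  have Ypc: "compact Yp" unfolding Yp_def by (rule compact_sub(1)[OF Y c])
  have pYp: "p \<in> Yp" using p cp e by (simp add: Yp_def)
  obtain yp where yp: "yp \<in> Yp" and ypmin: "\<forall>y'\<in>Yp. g yp + l * c yp \<le> g y' + l * c y'"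
    using cont_min_exists[OF Ypc _ continuous_on_subset[OF hc]] pYp by (auto simp: Yp_def)
  have ypY: "yp \<in> Y" "c yp \<le> e" using yp by (auto simp: Yp_def)
  have yp_opt: "g yp + l * c yp \<le> m l"
  proof (rule le_by_eps[where r=1 and k="c ys"])
    fix \<delta> :: real assume d: "0 < \<delta>" "\<delta> \<le> 1"
    obtain y' where y': "y' \<in> Y" "m (l + \<delta>) = g y' + (l + \<delta>) * c y'" using mex by blast
    have "\<phi> (l + \<delta>) \<le> \<phi> l" using glob l d by auto
    then have "g y' + (l + \<delta>) * c y' - (l + \<delta>) * e \<le> m l - l * e" using y' by (simp add: \<phi>_def)
    moreover have "m l \<le> g y' + l * c y'" using mle[OF y'(1)] .
    ultimately have "\<delta> * c y' \<le> \<delta> * e" by (simp add: algebra_simps)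
    then have "c y' \<le> e" using d by simp
    then have "y' \<in> Yp" using y' by (simp add: Yp_def)
    then have "g yp + l * c yp \<le> g y' + l * c y'" using ypmin by blast
    also have "\<dots> \<le> m (l + \<delta>)" using y' c0[OF y'(1)] d by (simp add: algebra_simps)
    also have "\<dots> \<le> g ys + (l + \<delta>) * c ys" by (rule mle[OF ys(1)])
    also have "\<dots> = m l + \<delta> * c ys" using ys by (simp add: algebra_simps)
    finally show "g yp + l * c yp \<le> m l + \<delta> * c ys" .
  qed (use c0[OF ys(1)] in auto)
  show ?thesis
  proof (cases "l = 0")
    case True
    have w1: "1 * c yp + (1 - 1) * c yp \<le> e \<and> 1 * g yp + (1 - 1) * g yp \<le> m l - l * e"
      using ypY yp_opt True by simp
    have W: "\<exists>y1\<in>Y. \<exists>y2\<in>Y. \<exists>t\<in>{0..1}. t * c y1 + (1 - t) * c y2 \<le> e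
            \<and> t * g y1 + (1 - t) * g y2 \<le> m l - l * e"
      using w1 ypY(1) by (metis atLeastAtMost_iff order_refl zero_le_one)
    show ?thesis using l glob W unfolding \<phi>_def m_def M_def by blast
  next
    case False
    then have lpos: "l > 0" using l by simp
    define Ym where "Ym = {y\<in>Y. e \<le> c y}"
    have Ymc: "compact Ym" unfolding Ym_def by (rule compact_sub(2)[OF Y c])
    have Ym_aux: "\<exists>y'\<in>Ym. g y' + l * c y' \<le> m l + \<delta> * C" if d: "0 < \<delta>" "\<delta> \<le> l" for \<delta>
    proof -
      obtain y' where y': "y' \<in> Y" "m (l - \<delta>) = g y' + (l - \<delta>) * c y'" using mex by blast
      have "\<phi> (l - \<delta>) \<le> \<phi> l" using glob d by auto
      then have "g y' + (l - \<delta>) * c y' - (l - \<delta>) * e \<le> m l - l * e" using y' by (simp add: \<phi>_def)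
      moreover have "m l \<le> g y' + l * c y'" using mle[OF y'(1)] .
      ultimately have "\<delta> * e \<le> \<delta> * c y'" by (simp add: algebra_simps)
      then have "e \<le> c y'" using d by simp
      then have "y' \<in> Ym" using y' by (simp add: Ym_def)
      moreover have "g y' + l * c y' \<le> m l + \<delta> * C"
      proof -
        have "g y' + l * c y' = m (l - \<delta>) + \<delta> * c y'" using y' by (simp add: algebra_simps)
        also have "\<dots> \<le> g ys + (l - \<delta>) * c ys + \<delta> * c y'" using mle[OF ys(1)] by simp
        also have "\<dots> \<le> m l + \<delta> * C"
        proof -
          have "\<delta> * c y' \<le> \<delta> * C" using mult_left_mono[OF C[OF y'(1)], of \<delta>] d by simp
          moreover have "\<delta> * c ys \<ge> 0" using d c0[OF ys(1)] by simp
          ultimately show ?thesis using ys by (simp add: algebra_simps)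
        qed
        finally show ?thesis .
      qed
      ultimately show ?thesis by blast
    qed
    have Ymne: "Ym \<noteq> {}" using Ym_aux[of l] lpos by auto
    obtain ym where ym: "ym \<in> Ym" and ymmin: "\<forall>y'\<in>Ym. g ym + l * c ym \<le> g y' + l * c y'"
      using cont_min_exists[OF Ymc Ymne continuous_on_subset[OF hc]] by (auto simp: Ym_def)
    have ymY: "ym \<in> Y" "e \<le> c ym" using ym by (auto simp: Ym_def)
    have ym_opt: "g ym + l * c ym \<le> m l"
    proof (rule le_by_eps[where r=l and k=C])
      fix \<delta> :: real assume d: "0 < \<delta>" "\<delta> \<le> l"
      then show "g ym + l * c ym \<le> m l + \<delta> * C" using Ym_aux ymmin by fastforce
    qed (use lpos C0 in auto)
    have gp: "g yp = m l - l * c yp" "g ym = m l - l * c ym"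
      using yp_opt ym_opt mle[OF ypY(1), of l] mle[OF ymY(1), of l] by (auto simp: algebra_simps)
    show ?thesis
    proof (cases "c ym = c yp")
      case True
      then have ce: "c yp = e" using ypY ymY by simp
      have w1: "1 * c yp + (1 - 1) * c yp \<le> e \<and> 1 * g yp + (1 - 1) * g yp \<le> m l - l * e"
        using ce gp by simp
      have W: "\<exists>y1\<in>Y. \<exists>y2\<in>Y. \<exists>t\<in>{0..1}. t * c y1 + (1 - t) * c y2 \<le> e
              \<and> t * g y1 + (1 - t) * g y2 \<le> m l - l * e"
        using w1 ypY(1) by (metis atLeastAtMost_iff order_refl zero_le_one)
      show ?thesis using l glob W unfolding \<phi>_def m_def M_def by blast
    next
      case False
      then have pos: "c ym - c yp > 0" using ypY ymY by simp
      define t where "t = (c ym - e) / (c ym - c yp)"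
      have t01: "t \<in> {0..1}" using pos ypY ymY by (auto simp: t_def field_simps)
      have eq: "t * c ym - t * c yp = c ym - e"
      proof -
        have "t * c ym - t * c yp = t * (c ym - c yp)" by (simp add: right_diff_distrib)
        also have "\<dots> = c ym - e" using pos by (simp add: t_def)
        finally show ?thesis .
      qed
      have "t * c yp + (1 - t) * c ym = c ym - (t * c ym - t * c yp)"
        by (simp add: algebra_simps)
      then have tc: "t * c yp + (1 - t) * c ym = e" using eq by simp
      have "t * g yp + (1 - t) * g ym = t * (m l - l * c yp) + (1 - t) * (m l - l * c ym)"
        by (simp only: gp)
      also have "\<dots> = m l - l * (t * c yp + (1 - t) * c ym)"
        by (simp add: algebra_simps)
      finally have "t * g yp + (1 - t) * g ym = m l - l * (t * c yp + (1 - t) * c ym)" .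
      then have tg: "t * g yp + (1 - t) * g ym = m l - l * e" using tc by simp
      have W: "\<exists>y1\<in>Y. \<exists>y2\<in>Y. \<exists>t\<in>{0..1}. t * c y1 + (1 - t) * c y2 \<le> e
            \<and> t * g y1 + (1 - t) * g y2 \<le> m l - l * e"
      proof -
        have "t * c yp + (1 - t) * c ym \<le> e \<and> t * g yp + (1 - t) * g ym \<le> m l - l * e"
          using tc tg by simp
        then show ?thesis using t01 ypY(1) ymY(1) by blast
      qed
      show ?thesis using l glob W unfolding \<phi>_def m_def M_def by blast
    qed
  qed
qed



lemma metric_cont:
  assumes M: "Metric_space Y d" and T: "Metric_space.mtopology Y d = subtopology euclidean Y"
  shows "continuous_on (Y \<times> Y) (\<lambda>(x,y). d x y)"
proof -
  interpret Metric_space Y d by (rule M)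
  have "continuous_map (prod_topology (mtopology_of (metric (Y,d))) (mtopology_of (metric (Y,d))))
          euclidean (\<lambda>(x,y). mdist (metric (Y,d)) x y)"
    by (rule continuous_map_metric)
  then have "continuous_map (prod_topology (subtopology euclidean Y) (subtopology euclidean Y))
          euclidean (\<lambda>(x,y). d x y)"
    using T by simp
  then show ?thesis by (simp flip: subtopology_Times)
qed

lemma measurable_on_prod:
  fixes f :: "('a::second_countable_topology \<times> 'a) \<Rightarrow> real"
  assumes Y: "closed Y" and f: "continuous_on (Y \<times> Y) f"
  shows "f \<in> borel_measurable (restrict_space borel Y \<Otimes>\<^sub>M restrict_space borel Y)"
proof -
  have "(\<lambda>z. if z \<in> Y \<times> Y then f z else 0) \<in> borel_measurable borel"
    by (rule borel_measurable_continuous_on_if) (use Y f closed_Times[OF Y Y] borel_closed in auto)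
  then have g: "(\<lambda>z. if z \<in> Y \<times> Y then f z else 0) \<in> borel_measurable (borel \<Otimes>\<^sub>M borel)"
    by (simp add: borel_prod)
  have id: "(\<lambda>z. z) \<in> measurable (restrict_space borel Y \<Otimes>\<^sub>M restrict_space borel Y) (borel \<Otimes>\<^sub>M borel)"
  proof -
    have i: "(\<lambda>x. x) \<in> measurable (restrict_space borel Y) borel"
      by (intro measurable_restrict_space1) measurable
    show ?thesis unfolding measurable_pair_iff
      using measurable_compose[OF measurable_fst i] measurable_compose[OF measurable_snd i]
      by (simp add: o_def) blast
  qed
  have "(\<lambda>z. if z \<in> Y \<times> Y then f z else 0) \<in> borel_measurable (restrict_space borel Y \<Otimes>\<^sub>M restrict_space borel Y)"
    using measurable_compose[OF id g] by simp
  then show ?thesis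
    by (rule measurable_cong[THEN iffD1, rotated]) (auto simp: space_pair_measure space_restrict_space)
qed



lemma wass_dirac:
  fixes d :: "'a::{metric_space,second_countable_topology} \<Rightarrow> 'a \<Rightarrow> real"
  assumes Y: "closed Y" and p: "p \<in> Y" and dc: "continuous_on (Y \<times> Y) (\<lambda>(x,y). d x y)"
    and d0: "\<forall>x\<in>Y. \<forall>y\<in>Y. d x y \<ge> 0" and s: "s > 0"
    and q: "q \<in> borel_prob_measures Y"
  shows "wasserstein d s (return (restrict_space borel Y) p) q = (\<integral>y. d p y powr s \<partial>q) powr (1/s)"
proof -
  define B where "B = restrict_space borel Y"
  have qP: "prob_space q" and sq: "sets q = sets B" using q by (auto simp: borel_prob_measures_def B_def)
  have spB: "space B = Y" by (simp add: B_def space_restrict_space)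
  have pB: "p \<in> space B" using p spB by simp
  define f where "f = (\<lambda>(x,y). d x y powr s)"
  have fc: "continuous_on (Y \<times> Y) f"
  proof -
    have "continuous_on (Y \<times> Y) (\<lambda>z. ((\<lambda>(x,y). d x y) z) powr s)"
      by (rule continuous_on_powr'[OF dc continuous_on_const]) (use s d0 in auto)
    then show ?thesis by (simp add: f_def case_prod_beta')
  qed
  have fm: "f \<in> borel_measurable (B \<Otimes>\<^sub>M B)"
    unfolding B_def by (rule measurable_on_prod[OF Y fc])
  define c where "c = (\<lambda>y. d p y powr s)"
  have cc: "continuous_on Y c"
  proof -
    have "continuous_on Y (f \<circ> (\<lambda>y. (p, y)))"
      by (rule continuous_on_compose[OF continuous_on_Pair[OF continuous_on_const continuous_on_id]])
         (rule continuous_on_subset[OF fc], use p in auto)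
    then show ?thesis by (simp add: o_def f_def c_def)
  qed
  have cm: "c \<in> borel_measurable B" unfolding B_def by (rule borel_measurable_continuous_on_restrict[OF cc])
  have cmq: "c \<in> borel_measurable q" using cm sq by (simp cong: measurable_cong_sets)
  have sRB: "sets (return B p \<Otimes>\<^sub>M q) = sets (B \<Otimes>\<^sub>M B)"
    by (rule sets_pair_measure_cong) (simp_all add: sq)
  have all: "integral\<^sup>L \<gamma> f = integral\<^sup>L q c" if g: "\<gamma> \<in> couplings (return B p) q" for \<gamma>
  proof -
    have gP: "prob_space \<gamma>" and sg: "sets \<gamma> = sets (B \<Otimes>\<^sub>M B)"
      and g1: "distr \<gamma> (return B p) fst = return B p" and g2: "distr \<gamma> q snd = q"
      using g sRB by (auto simp: couplings_def)
    have fstm: "fst \<in> measurable \<gamma> (return B p)"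
      using measurable_fst[of B B] sg by (simp cong: measurable_cong_sets)
    have sndm: "snd \<in> measurable \<gamma> q"
      using measurable_snd[of B B] sg sq by (simp cong: measurable_cong_sets)
    have predp: "Measurable.pred B (\<lambda>x. x = p)"
    proof -
      have "{p} \<in> sets borel" by (rule borel_closed) simp
      then have "Y \<inter> {p} \<in> sets B" unfolding B_def sets_restrict_space by blast
      moreover have "{x \<in> space B. x = p} = Y \<inter> {p}" using p spB by auto
      ultimately show ?thesis by (simp add: pred_def)
    qed
    have "AE x in return B p. x = p"
      using AE_return[OF pB predp] by simp
    then have "AE x in distr \<gamma> (return B p) fst. x = p" unfolding g1 .
    from AE_distrD[OF fstm this] have ae: "AE z in \<gamma>. fst z = p" .
    have "integral\<^sup>L \<gamma> f = integral\<^sup>L \<gamma> (\<lambda>z. c (snd z))"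
    proof (rule integral_cong_AE)
      show "f \<in> borel_measurable \<gamma>" using fm sg by (simp cong: measurable_cong_sets)
      show "(\<lambda>z. c (snd z)) \<in> borel_measurable \<gamma>" using measurable_compose[OF sndm cmq] .
      show "AE z in \<gamma>. f z = c (snd z)" using ae by eventually_elim (auto simp: f_def c_def)
    qed
    also have "\<dots> = integral\<^sup>L (distr \<gamma> q snd) c"
      by (rule integral_distr[symmetric, OF sndm cmq])
    also have "\<dots> = integral\<^sup>L q c" using g2 by simp
    finally show ?thesis .
  qed
  define \<gamma>0 where "\<gamma>0 = distr q (B \<Otimes>\<^sub>M B) (\<lambda>y. (p, y))"
  have idq: "(\<lambda>y. y) \<in> measurable q B" by (rule measurable_ident_sets[OF sq])
  have pm: "(\<lambda>y. (p, y)) \<in> measurable q (B \<Otimes>\<^sub>M B)"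
    by (rule measurable_Pair[OF measurable_const[OF pB] idq])
  have g0: "\<gamma>0 \<in> couplings (return B p) q"
  proof -
    have "prob_space \<gamma>0" unfolding \<gamma>0_def by (rule prob_space.prob_space_distr[OF qP pm])
    moreover have "sets \<gamma>0 = sets (return B p \<Otimes>\<^sub>M q)" using sRB by (simp add: \<gamma>0_def)
    moreover have "distr \<gamma>0 (return B p) fst = return B p"
    proof -
      have fm': "fst \<in> measurable (B \<Otimes>\<^sub>M B) (return B p)"
        using measurable_fst[of B B] by (simp cong: measurable_cong_sets)
      have "distr \<gamma>0 (return B p) fst = distr q (return B p) (fst \<circ> (\<lambda>y. (p, y)))"
        unfolding \<gamma>0_def by (rule distr_distr[OF fm' pm])
      also have "\<dots> = distr q (return B p) (\<lambda>y. p)" by (simp add: o_def)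
      also have "\<dots> = return (return B p) p"
        by (rule prob_space.distr_const[OF qP]) (simp add: pB)
      also have "\<dots> = return B p" using return_sets_cong[of "return B p" B] by simp
      finally show ?thesis .
    qed
    moreover have "distr \<gamma>0 q snd = q"
    proof -
      have sm: "snd \<in> measurable (B \<Otimes>\<^sub>M B) q"
        using measurable_snd[of B B] sq by (simp cong: measurable_cong_sets)
      have "distr \<gamma>0 q snd = distr q q (snd \<circ> (\<lambda>y. (p, y)))"
        unfolding \<gamma>0_def by (rule distr_distr[OF sm pm])
      also have "\<dots> = distr q q (\<lambda>y. y)" by (simp add: o_def)
      also have "\<dots> = q" by (rule distr_id2) simp
      finally show ?thesis .
    qed
    ultimately show ?thesis by (simp add: couplings_def)
  qed
  have "(INF \<gamma>\<in>couplings (return B p) q. integral\<^sup>L \<gamma> f) = (INF \<gamma>\<in>couplings (return B p) q. integral\<^sup>L q c)"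
    by (rule INF_cong) (simp_all add: all)
  also have "\<dots> = integral\<^sup>L q c" using g0 by (auto intro: cINF_const)
  finally show ?thesis unfolding wasserstein_def B_def[symmetric] f_def c_def by simp
qed



lemma mixture:
  fixes Y :: "'a::topological_space set"
  assumes "y1 \<in> Y" "y2 \<in> Y" "t \<in> {0..1}"
  shows "\<exists>q\<in>borel_prob_measures Y. \<forall>f. continuous_on Y f \<longrightarrow>
            integral\<^sup>L q f = t * f y1 + (1 - t) * (f y2 :: real)"
proof -
  define B where "B = restrict_space borel Y"
  have spB: "space B = Y" by (simp add: B_def space_restrict_space)
  define T where "T = (\<lambda>b::bool. if b then y1 else y2)"
  have Tm: "T \<in> measurable (measure_pmf (bernoulli_pmf t)) B"
    using assms spB by (auto simp: T_def)
  define q where "q = distr (measure_pmf (bernoulli_pmf t)) B T"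
  have "q \<in> borel_prob_measures Y"
    unfolding borel_prob_measures_def q_def
    using prob_space.prob_space_distr[OF prob_space_measure_pmf Tm] by (simp add: B_def)
  moreover have "integral\<^sup>L q f = t * f y1 + (1 - t) * f y2" if f: "continuous_on Y f" for f :: "'a \<Rightarrow> real"
  proof -
    have fm: "f \<in> borel_measurable B" unfolding B_def by (rule borel_measurable_continuous_on_restrict[OF f])
    have "integral\<^sup>L q f = (\<integral>b. f (T b) \<partial>measure_pmf (bernoulli_pmf t))"
      unfolding q_def by (rule integral_distr[OF Tm fm])
    also have "\<dots> = t * f y1 + (1 - t) * f y2"
      using assms(3) by (simp add: T_def algebra_simps)
    finally show ?thesis .
  qed
  ultimately show ?thesis by blast
qed

lemma powr_inv_le_iff:
  fixes x \<epsilon> s :: real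
  assumes "x \<ge> 0" "\<epsilon> > 0" "s > 0"
  shows "x powr (1/s) \<le> \<epsilon> \<longleftrightarrow> x \<le> \<epsilon> powr s"
proof
  assume h: "x powr (1/s) \<le> \<epsilon>"
  have "(x powr (1/s)) powr s \<le> \<epsilon> powr s"
    by (rule powr_mono2) (use assms h in auto)
  also have "(x powr (1/s)) powr s = x" using assms by (simp add: powr_powr)
  finally show "x \<le> \<epsilon> powr s" .
next
  assume h: "x \<le> \<epsilon> powr s"
  have "x powr (1/s) \<le> (\<epsilon> powr s) powr (1/s)"
    by (rule powr_mono2) (use assms h in auto)
  also have "(\<epsilon> powr s) powr (1/s) = \<epsilon>" using assms by (simp add: powr_powr)
  finally show "x powr (1/s) \<le> \<epsilon>" .
qed

lemma robust_dual:
  fixes d :: "'a::{metric_space,second_countable_topology} \<Rightarrow> 'a \<Rightarrow> real" and g :: "'a \<Rightarrow> real"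
  assumes Y: "compact Y" and p: "p \<in> Y" and dc: "continuous_on (Y \<times> Y) (\<lambda>(x,y). d x y)"
    and d0: "\<forall>x\<in>Y. \<forall>y\<in>Y. d x y \<ge> 0" and dpp: "d p p = 0" and s: "s \<ge> 1" and eps: "\<epsilon> > 0"
    and g: "continuous_on Y g" and K: "\<And>y. y \<in> Y \<Longrightarrow> \<bar>g y\<bar> \<le> K"
  shows "\<exists>l\<in>{0..2*K/\<epsilon> powr s}.
     (\<forall>l'\<ge>0. (INF y\<in>Y. g y + l' * d p y powr s) - l' * \<epsilon> powr s
              \<le> (INF y\<in>Y. g y + l * d p y powr s) - l * \<epsilon> powr s) \<and>
     (INF q\<in>{q \<in> borel_prob_measures Y. wasserstein d s (return (restrict_space borel Y) p) q \<le> \<epsilon>}.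
         integral\<^sup>L q g) = (INF y\<in>Y. g y + l * d p y powr s) - l * \<epsilon> powr s"
proof -
  define e where "e = \<epsilon> powr s"
  have e0: "e > 0" using eps by (simp add: e_def)
  define c where "c = (\<lambda>y. d p y powr s)"
  have cc: "continuous_on Y c"
  proof -
    have "continuous_on Y ((\<lambda>(x,y). d x y) \<circ> (\<lambda>y. (p, y)))"
      by (rule continuous_on_compose[OF continuous_on_Pair[OF continuous_on_const continuous_on_id]])
         (rule continuous_on_subset[OF dc], use p in auto)
    then have "continuous_on Y (\<lambda>y. d p y)" by (simp add: o_def)
    then show ?thesis unfolding c_def
      by (rule continuous_on_powr'[OF _ continuous_on_const]) (use s d0 p in auto)
  qed
  have c0: "\<And>y. y \<in> Y \<Longrightarrow> c y \<ge> 0" by (simp add: c_def)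
  have cp: "c p = 0" by (simp add: c_def dpp)
  define \<Phi> where "\<Phi> l = (INF y\<in>Y. g y + l * c y) - l * e" for l
  obtain l where l: "l \<in> {0..2*K/e}" and glob: "\<forall>l'\<ge>0. \<Phi> l' \<le> \<Phi> l"
    and W: "\<exists>y1\<in>Y. \<exists>y2\<in>Y. \<exists>t\<in>{0..1}. t * c y1 + (1 - t) * c y2 \<le> e
            \<and> t * g y1 + (1 - t) * g y2 \<le> \<Phi> l"
    using duality[OF Y p g cc c0 cp e0 K] unfolding \<Phi>_def by blast
  define B where "B = restrict_space borel Y"
  define S where "S = {q \<in> borel_prob_measures Y. wasserstein d s (return B p) q \<le> \<epsilon>}"
  have sp: "space q = Y" "sets q = sets B" "prob_space q" if q: "q \<in> borel_prob_measures Y" for q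
  proof -
    show sq: "sets q = sets B" and "prob_space q" using q by (auto simp: borel_prob_measures_def B_def)
    show "space q = Y" using sets_eq_imp_space_eq[OF sq] by (simp add: B_def space_restrict_space)
  qed
  have intg: "integrable q f"
    if q: "q \<in> borel_prob_measures Y" and f: "continuous_on Y f" for q and f :: "'a \<Rightarrow> real"
  proof -
    obtain C where fC: "\<And>y. y \<in> Y \<Longrightarrow> norm (f y) \<le> C"
      using compact_imp_bounded[OF compact_continuous_image[OF f Y]] unfolding bounded_iff by auto
    have fm: "f \<in> borel_measurable q"
      using borel_measurable_continuous_on_restrict[OF f] sp(2)[OF q] by (simp add: B_def cong: measurable_cong_sets)
    interpret prob_space q by (rule sp(3)[OF q])
    show "integrable q f"
      by (rule integrable_const_bound[where B=C]) (use fC sp(1)[OF q] fm in auto)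
  qed
  have memS: "q \<in> S \<longleftrightarrow> integral\<^sup>L q c \<le> e" if q: "q \<in> borel_prob_measures Y" for q
  proof -
    have "integral\<^sup>L q c \<ge> 0"
      by (rule integral_nonneg_AE) (use sp(1)[OF q] c0 in auto)
    moreover have "wasserstein d s (return B p) q = (integral\<^sup>L q c) powr (1/s)"
      unfolding B_def c_def
      by (rule wass_dirac[OF compact_imp_closed[OF Y] p dc d0 _ q]) (use s in simp)
    ultimately show ?thesis using q eps s unfolding S_def e_def
      by (simp add: powr_inv_le_iff)
  qed
  have weak: "\<Phi> l' \<le> integral\<^sup>L q g" if q: "q \<in> S" and l': "l' \<ge> 0" for q l'
  proof -
    have qb: "q \<in> borel_prob_measures Y" using q by (simp add: S_def)
    interpret prob_space q by (rule sp(3)[OF qb])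
    have ce: "integral\<^sup>L q c \<le> e" using memS[OF qb] q by simp
    have ig: "integrable q g" and ic: "integrable q c" using intg[OF qb] g cc by auto
    have "(INF y\<in>Y. g y + l' * c y) = integral\<^sup>L q (\<lambda>_. (INF y\<in>Y. g y + l' * c y))"
      by (simp add: prob_space)
    also have "\<dots> \<le> integral\<^sup>L q (\<lambda>y. g y + l' * c y)"
    proof (rule integral_mono)
      show "integrable q (\<lambda>y. g y + l' * c y)" using ig ic by simp
      fix y assume "y \<in> space q"
      then have "y \<in> Y" using sp(1)[OF qb] by simp
      then show "(INF y\<in>Y. g y + l' * c y) \<le> g y + l' * c y"
        by (rule inf_le_point[OF Y, rotated]) (intro continuous_intros g cc)
    qed simp
    also have "\<dots> = integral\<^sup>L q g + l' * integral\<^sup>L q c" using ig ic by simp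
    also have "\<dots> \<le> integral\<^sup>L q g + l' * e" using ce l' by (simp add: mult_left_mono)
    finally show ?thesis unfolding \<Phi>_def by simp
  qed
  obtain y1 y2 t where y: "y1 \<in> Y" "y2 \<in> Y" "t \<in> {0..1}" and
    tc: "t * c y1 + (1 - t) * c y2 \<le> e" and tg: "t * g y1 + (1 - t) * g y2 \<le> \<Phi> l"
    using W by blast
  obtain qs where qs: "qs \<in> borel_prob_measures Y"
    and qsi: "\<And>f. continuous_on Y f \<Longrightarrow> integral\<^sup>L qs f = t * f y1 + (1 - t) * f y2"
    using mixture[OF y] by blast
  have qsS: "qs \<in> S" using memS[OF qs] qsi[OF cc] tc by simp
  have qsg: "integral\<^sup>L qs g \<le> \<Phi> l" using qsi[OF g] tg by simp
  have "(INF q\<in>S. integral\<^sup>L q g) = \<Phi> l"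
  proof (rule antisym)
    show "(INF q\<in>S. integral\<^sup>L q g) \<le> \<Phi> l"
    proof -
      have "bdd_below ((\<lambda>q. integral\<^sup>L q g) ` S)"
        using weak[of _ l] l by (auto simp: bdd_below_def)
      from cINF_lower[OF this qsS] show ?thesis using qsg by linarith
    qed
    show "\<Phi> l \<le> (INF q\<in>S. integral\<^sup>L q g)"
      by (rule cINF_greatest) (use qsS weak l in auto)
  qed
  then show ?thesis using l glob unfolding \<Phi>_def S_def B_def c_def e_def by blast
qed



lemma compact_PiE_fun:
  fixes S :: "'i \<Rightarrow> 'b::topological_space set"
  assumes "\<And>j. j \<in> I \<Longrightarrow> compact (S j)"
  shows "compact (PiE I S)"
proof -
  define S' where "S' j = (if j \<in> I then S j else {undefined})" for j
  have eq: "PiE I S = PiE UNIV S'"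
    by (auto simp: S'_def PiE_iff extensional_def split: if_splits)
  have "compactin (product_topology (\<lambda>_. euclidean) UNIV) (PiE UNIV S')"
    unfolding compactin_PiE using assms by (auto simp: S'_def)
  then show ?thesis unfolding eq euclidean_product_topology by simp
qed

lemma concave_inf_lin:
  fixes F :: "('a::real_vector \<times> real) \<Rightarrow> 'b \<Rightarrow> real"
  assumes Z: "convex Z" and Y: "Y \<noteq> {}" and conc: "\<And>y. y \<in> Y \<Longrightarrow> concave_on Z (\<lambda>z. F z y)"
    and bdd: "\<And>z. z \<in> Z \<Longrightarrow> bdd_below ((\<lambda>y. F z y) ` Y)"
  shows "concave_on Z (\<lambda>z. (INF y\<in>Y. F z y) - snd z * e)"
  unfolding concave_on_iff
proof (intro conjI ballI allI impI Z)
  fix x y :: "'a \<times> real" and a b :: real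
  assume xy: "x \<in> Z" "y \<in> Z" and ab: "a \<ge> 0" "b \<ge> 0" "a + b = 1"
  have "a * (INF w\<in>Y. F x w) + b * (INF w\<in>Y. F y w) \<le> (INF w\<in>Y. F (a *\<^sub>R x + b *\<^sub>R y) w)"
  proof (rule cINF_greatest[OF Y])
    fix w assume w: "w \<in> Y"
    have "a * (INF w\<in>Y. F x w) \<le> a * F x w"
      by (rule mult_left_mono[OF cINF_lower[OF bdd[OF xy(1)] w] ab(1)])
    moreover have "b * (INF w\<in>Y. F y w) \<le> b * F y w"
      by (rule mult_left_mono[OF cINF_lower[OF bdd[OF xy(2)] w] ab(2)])
    moreover have "a * F x w + b * F y w \<le> F (a *\<^sub>R x + b *\<^sub>R y) w"
      using conc[OF w] xy ab unfolding concave_on_iff by blast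
    ultimately show "a * (INF w\<in>Y. F x w) + b * (INF w\<in>Y. F y w) \<le> F (a *\<^sub>R x + b *\<^sub>R y) w"
      by linarith
  qed
  moreover have "snd (a *\<^sub>R x + b *\<^sub>R y) = a * snd x + b * snd y" by simp
  ultimately show "a * ((INF w\<in>Y. F x w) - snd x * e) + b * ((INF w\<in>Y. F y w) - snd y * e)
      \<le> (INF w\<in>Y. F (a *\<^sub>R x + b *\<^sub>R y) w) - snd (a *\<^sub>R x + b *\<^sub>R y) * e"
    by (simp add: algebra_simps)
qed

lemma slice_cont:
  assumes "continuous_on (A \<times> Y) (\<lambda>(x,y). f x y)" "x \<in> A"
  shows "continuous_on Y (f x)"
proof -
  have "continuous_on Y ((\<lambda>(x,y). f x y) \<circ> (\<lambda>y. (x, y)))"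
    by (rule continuous_on_compose[OF continuous_on_Pair[OF continuous_on_const continuous_on_id]])
       (rule continuous_on_subset[OF assms(1)], use assms(2) in auto)
  then show ?thesis by (simp add: o_def)
qed

lemma P_cont: "continuous_on UNIV (\<lambda>b::nat \<Rightarrow> ('v::topological_space \<times> real). opp_profile N i (\<lambda>j. fst (b j)))"
proof (rule continuous_on_coordinatewise_then_product)
  fix j
  show "continuous_on UNIV (\<lambda>b::nat \<Rightarrow> ('v \<times> real). opp_profile N i (\<lambda>j. fst (b j)) j)"
  proof (cases "j \<in> {..<N} - {i}")
    case True
    then have "(\<lambda>b::nat \<Rightarrow> ('v \<times> real). opp_profile N i (\<lambda>j. fst (b j)) j) = (\<lambda>b. fst (b j))"
      by (simp add: opp_profile_def)
    moreover have c: "continuous_on UNIV (\<lambda>b::nat \<Rightarrow> ('v \<times> real). b j)"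
      by (rule continuous_on_product_coordinates)
    ultimately show ?thesis
      using continuous_on_fst[OF c] by metis
  next
    case False
    then have "(\<lambda>b::nat \<Rightarrow> ('v \<times> real). opp_profile N i (\<lambda>j. fst (b j)) j) = (\<lambda>b. undefined)"
      by (auto simp add: opp_profile_def)
    then show ?thesis using continuous_on_const by metis
  qed
qed



theorem proposition3:
  fixes N :: nat
    and A :: "nat \<Rightarrow> 'v::euclidean_space set"
    and u :: "nat \<Rightarrow> 'v \<Rightarrow> (nat \<Rightarrow> 'v) \<Rightarrow> real"
    and d :: "nat \<Rightarrow> (nat \<Rightarrow> 'v) \<Rightarrow> (nat \<Rightarrow> 'v) \<Rightarrow> real"
    and \<epsilon> s :: real
  assumes game: "concave_game N A u"
    and nonempty: "\<forall>i<N. A i \<noteq> {}"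
    and eps: "\<epsilon> > 0"
    and s: "s \<ge> 1"
    and metric: "\<forall>i<N. Metric_space (opp_space N A i) (d i)"
    and compatible: "\<forall>i<N. Metric_space.mtopology (opp_space N A i) (d i)
                              = subtopology euclidean (opp_space N A i)"
  shows "concave_game N (lift_actions N A u s \<epsilon>) (lift_payoff N A u d s \<epsilon>)
       \<and> (\<forall>abar :: nat \<Rightarrow> 'v.
            strategically_robust_eq N A u d s \<epsilon> abar \<longleftrightarrow>
            (\<exists>lam :: nat \<Rightarrow> real. (\<forall>i<N. lam i \<ge> 0) \<and>
               nash_equilibrium N (lift_actions N A u s \<epsilon>) (lift_payoff N A u d s \<epsilon>)
                 (restrict (\<lambda>i. (abar i, lam i)) {..<N})))"
proof -
  define Y where "Y i = opp_space N A i" for i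
  define LA where "LA = lift_actions N A u s \<epsilon>"
  define M where "M i = lift_bound N A u s \<epsilon> i" for i
  define e where "e = \<epsilon> powr s"
  have e0: "e > 0" using eps by (simp add: e_def)
  have LA_eq: "LA i = A i \<times> {0..M i}" for i by (simp add: LA_def M_def lift_actions_def)
  have Ac: "compact (A i)" "convex (A i)" "continuous_on (A i \<times> Y i) (\<lambda>(x,y). u i x y)"
    "\<And>y. y \<in> Y i \<Longrightarrow> concave_on (A i) (\<lambda>x. u i x y)" if "i < N" for i
    using game that unfolding concave_game_def Y_def by auto
  have Yc: "compact (Y i)" if "i < N" for i
    unfolding Y_def opp_space_def by (rule compact_PiE_fun) (use Ac in auto)
  have Yne: "Y i \<noteq> {}" if "i < N" for i
    using nonempty that by (auto simp: Y_def opp_space_def PiE_eq_empty_iff)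
  have dc: "continuous_on (Y i \<times> Y i) (\<lambda>(x,y). d i x y)" if "i < N" for i
    unfolding Y_def by (rule metric_cont) (use metric compatible that in auto)
  have d0: "\<forall>x\<in>Y i. \<forall>y\<in>Y i. d i x y \<ge> 0" and dxx: "\<And>x. x \<in> Y i \<Longrightarrow> d i x x = 0" if "i < N" for i
    using metric that unfolding Y_def by (auto simp: Metric_space_def)
  define K where "K i = (SUP p\<in>A i \<times> Y i. \<bar>u i (fst p) (snd p)\<bar>)" for i
  have M_eq: "M i = 2 * K i / e" for i
    by (simp add: M_def lift_bound_def K_def Y_def e_def)
  have Kb: "\<bar>u i x y\<bar> \<le> K i" if "i < N" "x \<in> A i" "y \<in> Y i" for i x y
  proof -
    have "continuous_on (A i \<times> Y i) (\<lambda>p. \<bar>u i (fst p) (snd p)\<bar>)"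
    proof -
      have "continuous_on (A i \<times> Y i) (\<lambda>p. u i (fst p) (snd p))"
        using Ac(3)[OF that(1)] by (simp add: case_prod_beta')
      then show ?thesis by (intro continuous_intros)
    qed
    then have "bdd_above ((\<lambda>p. \<bar>u i (fst p) (snd p)\<bar>) ` (A i \<times> Y i))"
      using compact_continuous_image compact_Times[OF Ac(1)[OF that(1)] Yc[OF that(1)]]
      by (meson bounded_imp_bdd_above compact_imp_bounded)
    from cSUP_upper[OF _ this, of "(x,y)"] that show ?thesis by (simp add: K_def)
  qed
  define P where "P i b = opp_profile N i (\<lambda>j. fst (b j))" for i and b :: "nat \<Rightarrow> 'v \<times> real"
  have P_in: "P i b \<in> Y i" if "b \<in> opp_space N LA i" for i b
  proof -
    have "\<forall>j\<in>{..<N} - {i}. b j \<in> A j \<times> {0..M j}"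
      using that by (auto simp: opp_space_def LA_eq PiE_iff)
    then show ?thesis by (auto simp: P_def Y_def opp_space_def opp_profile_def PiE_iff mem_Times_iff)
  qed
  have lp_eq: "lift_payoff N A u d s \<epsilon> i xl b =
      (INF ah\<in>Y i. u i (fst xl) ah + snd xl * d i (P i b) ah powr s) - snd xl * e" for i xl b
    by (simp add: lift_payoff_def Y_def P_def e_def)
  have part1: "concave_game N LA (lift_payoff N A u d s \<epsilon>)"
    unfolding concave_game_def
  proof (intro allI impI conjI ballI)
    fix i assume i: "i < N"
    show cLA: "compact (LA i)" unfolding LA_eq by (rule compact_Times[OF Ac(1)[OF i] compact_Icc])
    show "convex (LA i)" unfolding LA_eq by (rule convex_Times[OF Ac(2)[OF i] convex_real_interval(5)])
    define Yl where "Yl = opp_space N LA i"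
    have cYl: "compact Yl" unfolding Yl_def opp_space_def
      by (rule compact_PiE_fun) (auto simp: LA_eq intro!: compact_Times Ac(1))
    define Z where "Z = LA i \<times> Yl"
    have cZ: "compact Z" unfolding Z_def by (rule compact_Times[OF cLA cYl])
    define F where "F z ah = u i (fst (fst z)) ah + snd (fst z) * d i (P i (snd z)) ah powr s" for z ah
    have contF: "continuous_on (Z \<times> Y i) (\<lambda>(z, ah). F z ah)"
    proof -
      have c1: "continuous_on (Z \<times> Y i) (\<lambda>w. u i (fst (fst (fst w))) (snd w))"
      proof -
        have "continuous_on (Z \<times> Y i) (\<lambda>w. (\<lambda>(x,y). u i x y) (fst (fst (fst w)), snd w))"
          by (rule continuous_on_compose2[OF Ac(3)[OF i] continuous_on_Pair[OF
                continuous_on_fst[OF continuous_on_fst[OF continuous_on_fst[OF continuous_on_id]]]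
                continuous_on_snd[OF continuous_on_id]]])
             (auto simp: Z_def LA_eq)
        then show ?thesis by simp
      qed
      have c2: "continuous_on (Z \<times> Y i) (\<lambda>w. d i (P i (snd (fst w))) (snd w))"
      proof -
        have cP: "continuous_on (Z \<times> Y i) (\<lambda>w. P i (snd (fst w)))"
          unfolding P_def
          by (rule continuous_on_compose2[OF P_cont continuous_on_snd[OF continuous_on_fst[OF continuous_on_id]]]) auto
        have "continuous_on (Z \<times> Y i) (\<lambda>w. (\<lambda>(x,y). d i x y) (P i (snd (fst w)), snd w))"
          by (rule continuous_on_compose2[OF dc[OF i] continuous_on_Pair[OF cP continuous_on_snd[OF continuous_on_id]]])
             (auto intro!: P_in simp: Z_def Yl_def)
        then show ?thesis by simp
      qed
      have c3: "continuous_on (Z \<times> Y i) (\<lambda>w. d i (P i (snd (fst w))) (snd w) powr s)"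
        by (rule continuous_on_powr'[OF c2 continuous_on_const])
           (use s d0[OF i] P_in in \<open>auto simp: Z_def Yl_def\<close>)
      have "continuous_on (Z \<times> Y i) (\<lambda>w. u i (fst (fst (fst w))) (snd w)
              + snd (fst (fst w)) * d i (P i (snd (fst w))) (snd w) powr s)"
        by (intro continuous_intros c1 c3)
      then show ?thesis by (simp add: F_def case_prod_beta')
    qed
    have "continuous_on Z (\<lambda>z. (INF ah\<in>Y i. F z ah) - snd (fst z) * e)"
      by (intro continuous_intros cont_inf[OF cZ Yc[OF i] Yne[OF i] contF])
    then show "continuous_on (LA i \<times> opp_space N LA i) (\<lambda>(x, y). lift_payoff N A u d s \<epsilon> i x y)"
      by (simp add: Z_def Yl_def lp_eq F_def case_prod_beta')
  next
    fix i b assume i: "i < N" and b: "b \<in> opp_space N LA i"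
    define c where "c ah = d i (P i b) ah powr s" for ah
    have cc: "continuous_on (Y i) c"
    proof -
      have "continuous_on (Y i) (\<lambda>ah. d i (P i b) ah)"
        by (rule slice_cont[OF dc[OF i] P_in[OF b]])
      then show ?thesis unfolding c_def
        by (rule continuous_on_powr'[OF _ continuous_on_const]) (use s d0[OF i] P_in[OF b] in auto)
    qed
    have c0: "c ah \<ge> 0" for ah by (simp add: c_def)
    have "concave_on (LA i) (\<lambda>z. (INF ah\<in>Y i. u i (fst z) ah + snd z * c ah) - snd z * e)"
    proof (rule concave_inf_lin[OF _ Yne[OF i]])
      show "convex (LA i)" unfolding LA_eq by (rule convex_Times[OF Ac(2)[OF i] convex_real_interval(5)])
    next
      fix ah assume ah: "ah \<in> Y i"
      show "concave_on (LA i) (\<lambda>z. u i (fst z) ah + snd z * c ah)"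
        unfolding concave_on_iff
      proof (intro conjI ballI allI impI)
        show "convex (LA i)" unfolding LA_eq by (rule convex_Times[OF Ac(2)[OF i] convex_real_interval(5)])
        fix x y :: "'v \<times> real" and a b :: real
        assume xy: "x \<in> LA i" "y \<in> LA i" and ab: "0 \<le> a" "0 \<le> b" "a + b = 1"
        have "a * u i (fst x) ah + b * u i (fst y) ah \<le> u i (a *\<^sub>R fst x + b *\<^sub>R fst y) ah"
          using Ac(4)[OF i ah] xy ab unfolding concave_on_iff LA_eq by auto
        then show "a * (u i (fst x) ah + snd x * c ah) + b * (u i (fst y) ah + snd y * c ah)
            \<le> u i (fst (a *\<^sub>R x + b *\<^sub>R y)) ah + snd (a *\<^sub>R x + b *\<^sub>R y) * c ah"
          by (simp add: algebra_simps)
      qed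
    next
      fix z assume z: "z \<in> LA i"
      have "continuous_on (Y i) (\<lambda>ah. u i (fst z) ah + snd z * c ah)"
        by (intro continuous_intros slice_cont[OF Ac(3)[OF i]] cc) (use z LA_eq in auto)
      then show "bdd_below ((\<lambda>ah. u i (fst z) ah + snd z * c ah) ` Y i)"
        using compact_continuous_image[OF _ Yc[OF i]]
        by (meson bounded_imp_bdd_below compact_imp_bounded)
    qed
    then show "concave_on (LA i) (\<lambda>x. lift_payoff N A u d s \<epsilon> i x b)"
      by (simp add: lp_eq c_def)
  qed
  define \<Phi> where "\<Phi> i abar x l = (INF y\<in>Y i. u i x y + l * d i (opp_profile N i abar) y powr s) - l * e"
    for i abar x l
  have key: "\<exists>l\<in>{0..M i}. (\<forall>l'\<ge>0. \<Phi> i abar x l' \<le> \<Phi> i abar x l)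
              \<and> robust_value N A u d s \<epsilon> i abar x = \<Phi> i abar x l"
    if i: "i < N" and ab: "\<forall>j<N. abar j \<in> A j" and x: "x \<in> A i" for i abar x
  proof -
    have p: "opp_profile N i abar \<in> Y i"
      using ab by (auto simp: Y_def opp_space_def opp_profile_def PiE_iff)
    have g: "continuous_on (Y i) (u i x)" by (rule slice_cont[OF Ac(3)[OF i] x])
    from robust_dual[OF Yc[OF i] p dc[OF i] d0[OF i] dxx[OF i p] s eps g Kb[OF i x]]
    show ?thesis
      unfolding \<Phi>_def M_eq e_def robust_value_def ambiguity_set_def Y_def by simp
  qed
  have lp_b: "lift_payoff N A u d s \<epsilon> i (x, l) (opp_profile N i (restrict (\<lambda>i. (abar i, lam i)) {..<N}))
      = \<Phi> i abar x l" for i x l abar lam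
  proof -
    have "P i (opp_profile N i (restrict (\<lambda>i. (abar i, lam i)) {..<N})) = opp_profile N i abar"
      by (auto simp: P_def opp_profile_def)
    then show ?thesis by (simp add: lp_eq \<Phi>_def)
  qed
  have part2: "strategically_robust_eq N A u d s \<epsilon> abar \<longleftrightarrow>
            (\<exists>lam :: nat \<Rightarrow> real. (\<forall>i<N. lam i \<ge> 0) \<and>
               nash_equilibrium N LA (lift_payoff N A u d s \<epsilon>)
                 (restrict (\<lambda>i. (abar i, lam i)) {..<N}))" for abar
  proof
    assume sre: "strategically_robust_eq N A u d s \<epsilon> abar"
    then have ab: "\<forall>j<N. abar j \<in> A j"
      and opt: "\<And>i x. i < N \<Longrightarrow> x \<in> A i \<Longrightarrow>
         robust_value N A u d s \<epsilon> i abar x \<le> robust_value N A u d s \<epsilon> i abar (abar i)"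
      by (auto simp: strategically_robust_eq_def)
    have "\<forall>i. \<exists>l. i < N \<longrightarrow> l \<in> {0..M i} \<and> (\<forall>l'\<ge>0. \<Phi> i abar (abar i) l' \<le> \<Phi> i abar (abar i) l)
              \<and> robust_value N A u d s \<epsilon> i abar (abar i) = \<Phi> i abar (abar i) l"
      using key ab by blast
    then obtain lam where lam: "\<And>i. i < N \<Longrightarrow> lam i \<in> {0..M i}"
      "\<And>i. i < N \<Longrightarrow> robust_value N A u d s \<epsilon> i abar (abar i) = \<Phi> i abar (abar i) (lam i)"
      by metis
    show "\<exists>lam :: nat \<Rightarrow> real. (\<forall>i<N. lam i \<ge> 0) \<and>
               nash_equilibrium N LA (lift_payoff N A u d s \<epsilon>)
                 (restrict (\<lambda>i. (abar i, lam i)) {..<N})"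
    proof (intro exI[of _ lam] conjI allI impI)
      show "\<And>i. i < N \<Longrightarrow> 0 \<le> lam i" using lam(1) by auto
      show "nash_equilibrium N LA (lift_payoff N A u d s \<epsilon>) (restrict (\<lambda>i. (abar i, lam i)) {..<N})"
        unfolding nash_equilibrium_def
      proof (intro conjI allI impI ballI)
        show "restrict (\<lambda>i. (abar i, lam i)) {..<N} \<in> PiE {..<N} LA"
          using ab lam(1) by (auto simp: LA_eq)
        fix i xl assume i: "i < N" and xl: "xl \<in> LA i"
        obtain x l where xl': "xl = (x, l)" "x \<in> A i" "l \<in> {0..M i}" using xl LA_eq by auto
        obtain lx where "lx \<in> {0..M i}" "\<forall>l'\<ge>0. \<Phi> i abar x l' \<le> \<Phi> i abar x lx"
          "robust_value N A u d s \<epsilon> i abar x = \<Phi> i abar x lx"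
          using key[OF i ab xl'(2)] by blast
        then have "\<Phi> i abar x l \<le> robust_value N A u d s \<epsilon> i abar x" using xl'(3) by auto
        also have "\<dots> \<le> robust_value N A u d s \<epsilon> i abar (abar i)" by (rule opt[OF i xl'(2)])
        also have "\<dots> = \<Phi> i abar (abar i) (lam i)" by (rule lam(2)[OF i])
        finally show "lift_payoff N A u d s \<epsilon> i xl (opp_profile N i (restrict (\<lambda>i. (abar i, lam i)) {..<N}))
          \<le> lift_payoff N A u d s \<epsilon> i (restrict (\<lambda>i. (abar i, lam i)) {..<N} i)
               (opp_profile N i (restrict (\<lambda>i. (abar i, lam i)) {..<N}))"
          using i by (simp add: xl'(1) lp_b)
      qed
    qed
  next
    assume "\<exists>lam :: nat \<Rightarrow> real. (\<forall>i<N. lam i \<ge> 0) \<and>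
               nash_equilibrium N LA (lift_payoff N A u d s \<epsilon>)
                 (restrict (\<lambda>i. (abar i, lam i)) {..<N})"
    then obtain lam where ne: "nash_equilibrium N LA (lift_payoff N A u d s \<epsilon>)
                 (restrict (\<lambda>i. (abar i, lam i)) {..<N})" by blast
    have mem: "abar i \<in> A i" "lam i \<in> {0..M i}" if "i < N" for i
      using ne that by (auto simp: nash_equilibrium_def LA_eq PiE_iff)
    have ab: "\<forall>j<N. abar j \<in> A j" using mem by auto
    show "strategically_robust_eq N A u d s \<epsilon> abar"
      unfolding strategically_robust_eq_def
    proof (intro allI impI conjI)
      fix i assume i: "i < N"
      show "abar i \<in> A i" by (rule mem(1)[OF i])
      show "\<forall>x\<in>A i. robust_value N A u d s \<epsilon> i abar x \<le> robust_value N A u d s \<epsilon> i abar (abar i)"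
      proof
      fix x assume x: "x \<in> A i"
      obtain lx where lx: "lx \<in> {0..M i}" "robust_value N A u d s \<epsilon> i abar x = \<Phi> i abar x lx"
        using key[OF i ab x] by blast
      obtain la where la: "\<forall>l'\<ge>0. \<Phi> i abar (abar i) l' \<le> \<Phi> i abar (abar i) la"
        "robust_value N A u d s \<epsilon> i abar (abar i) = \<Phi> i abar (abar i) la"
        using key[OF i ab mem(1)[OF i]] by blast
      have "(x, lx) \<in> LA i" using x lx(1) LA_eq by auto
      then have "lift_payoff N A u d s \<epsilon> i (x, lx) (opp_profile N i (restrict (\<lambda>i. (abar i, lam i)) {..<N}))
          \<le> lift_payoff N A u d s \<epsilon> i (restrict (\<lambda>i. (abar i, lam i)) {..<N} i)
               (opp_profile N i (restrict (\<lambda>i. (abar i, lam i)) {..<N}))"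
        using ne i unfolding nash_equilibrium_def by blast
      then have "\<Phi> i abar x lx \<le> \<Phi> i abar (abar i) (lam i)"
        using i by (simp only: lp_b restrict_apply' lessThan_iff)
      also have "\<dots> \<le> \<Phi> i abar (abar i) la" using la(1) mem(2)[OF i] by auto
      finally show "robust_value N A u d s \<epsilon> i abar x \<le> robust_value N A u d s \<epsilon> i abar (abar i)"
        using lx(2) la(2) by simp
      qed
    qed
  qed
  show ?thesis using part1 part2 unfolding LA_def by blast
qed

end
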